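(* Let $\mathfrak g$ be a Lie algebra and $V$ a $\mathfrak g$-module with action $x\cdot u$. Set $\mathbb U_0=\mathfrak g$ (degree 0), $\mathbb U_1=V[-1]$ ($V$ placed in degree 1, odd), and recursively $\mathbb U_{-p+1}=\mathrm{Hom}(\mathbb U_1,\mathbb U_{-p+2})$ for $p\ge2$ (so $\mathbb U_{-1}=\mathrm{Hom}(\mathbb U_1,\mathfrak g)$). Writing $x(u)=x\cdot u$ for $x\in\mathfrak g$, $u\in\mathbb U_1$, define brackets on $\mathbb U_{1-}=\bigoplus_{k\le1}\mathbb U_k$ (for pairs of degrees summing to $\le1$) by the Lie bracket of $\mathfrak g$ on $\mathfrak g\otimes\mathfrak g$ and recursively by $[x,u]=x(u)$, $[u,x]=-(-1)^{|x|}x(u)$, $[x,y](u)=[x,y(u)]+(-1)^{|y|}[x(u),y]$ for $x,y\in\mathbb U_{0-}$ and $u\in\mathbb U_1$. Then $\mathbb U_{1-}$ is a semilocal Lie superalgebra. In particular, for $x\in\mathfrak g$ and $\phi\in\mathbb U_{-1}$, $[x,\phi](u)=[x,\phi(u)]-\phi(x\cdot u)$.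
   Context: All vector spaces are over $\mathbb{K}=\mathbb{R}$ or $\mathbb{C}$, $\mathbb{Z}$-graded, parity equal to degree mod 2; $|x|$ is the degree. A semilocal Lie superalgebra is a graded space concentrated in degrees $\le1$ with bilinear brackets $A_i\otimes A_j\to A_{i+j}$ defined whenever $i+j\le 1$, satisfying $[x,y]=-(-1)^{|x||y|}[y,x]$ and $[x,[y,z]]-(-1)^{|x||y|}[y,[x,z]]=[[x,y],z]$ whenever all brackets involved are defined. *)

theory Defs
  imports Complex_Main
begin

text \<open>UG a is an element of U_0 = g,
  UV u an element of U_1 = V[-1], and UF f an element of some U_{-p} (p >= 1),
  f being a (linear) map from U_1 to U_{-p+1}.  The degree is tracked by the
  carrier sets Ucar below.\<close>
datatype ('g, 'v) U = UG 'g | UV 'v | UF "'v \<Rightarrow> ('g, 'v) U"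

definition psign :: "int \<Rightarrow> 'k::ring_1" where
  "psign k = (if even k then 1 else - 1)"

primrec uscale :: "('k \<Rightarrow> 'g \<Rightarrow> 'g) \<Rightarrow> ('k \<Rightarrow> 'v \<Rightarrow> 'v) \<Rightarrow> 'k \<Rightarrow> ('g, 'v) U \<Rightarrow> ('g, 'v) U" where
  "uscale sg sv c (UG a) = UG (sg c a)"
| "uscale sg sv c (UV w) = UV (sv c w)"
| "uscale sg sv c (UF f) = UF (\<lambda>u. uscale sg sv c (f u))"

primrec uadd :: "('g::plus, 'v::plus) U \<Rightarrow> ('g, 'v) U \<Rightarrow> ('g, 'v) U" where
  "uadd (UG a) y = (case y of UG b \<Rightarrow> UG (a + b) | _ \<Rightarrow> undefined)"
| "uadd (UV a) y = (case y of UV b \<Rightarrow> UV (a + b) | _ \<Rightarrow> undefined)"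
| "uadd (UF f) y = (case y of UF h \<Rightarrow> UF (\<lambda>u. uadd (f u) (h u)) | _ \<Rightarrow> undefined)"

primrec Uneg :: "('k \<Rightarrow> 'g \<Rightarrow> 'g) \<Rightarrow> ('k \<Rightarrow> 'v::plus \<Rightarrow> 'v) \<Rightarrow> nat \<Rightarrow> ('g::plus, 'v) U set" where
  "Uneg sg sv 0 = range UG"
| "Uneg sg sv (Suc p) = {UF f | f. (\<forall>u. f u \<in> Uneg sg sv p)
      \<and> (\<forall>u w. f (u + w) = uadd (f u) (f w))
      \<and> (\<forall>c u. f (sv c u) = uscale sg sv c (f u))}"

definition Ucar :: "('k \<Rightarrow> 'g \<Rightarrow> 'g) \<Rightarrow> ('k \<Rightarrow> 'v::plus \<Rightarrow> 'v) \<Rightarrow> int \<Rightarrow> ('g::plus, 'v) U set" where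
  "Ucar sg sv k = (if k = 1 then range UV else if k \<le> 0 then Uneg sg sv (nat (- k)) else {})"

fun gof :: "('g, 'v) U \<Rightarrow> 'g" where
  "gof (UG a) = a" | "gof _ = undefined"

fun vof :: "('g, 'v) U \<Rightarrow> 'v" where
  "vof (UV u) = u" | "vof _ = undefined"

fun ev :: "('g \<Rightarrow> 'v \<Rightarrow> 'v) \<Rightarrow> ('g, 'v) U \<Rightarrow> 'v \<Rightarrow> ('g, 'v) U" where
  "ev act (UG a) u = UV (act a u)"
| "ev act (UF f) u = f u"
| "ev act (UV w) u = undefined"

function br :: "('k::ring_1 \<Rightarrow> 'g \<Rightarrow> 'g) \<Rightarrow> ('k \<Rightarrow> 'v \<Rightarrow> 'v) \<Rightarrow> ('g \<Rightarrow> 'g \<Rightarrow> 'g)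
    \<Rightarrow> ('g \<Rightarrow> 'v \<Rightarrow> 'v) \<Rightarrow> int \<Rightarrow> int \<Rightarrow> ('g::plus, 'v::plus) U \<Rightarrow> ('g, 'v) U \<Rightarrow> ('g, 'v) U" where
  "br sg sv lb act i j x y =
    (if i = 0 \<and> j = 0 then UG (lb (gof x) (gof y))
     else if i \<le> 0 \<and> j = 1 then ev act x (vof y)
     else if i = 1 \<and> j \<le> 0 then uscale sg sv (- psign j) (ev act y (vof x))
     else if i \<le> 0 \<and> j \<le> 0 then
       UF (\<lambda>u. uadd (br sg sv lb act i (j + 1) x (ev act y u))
                     (uscale sg sv (psign j) (br sg sv lb act (i + 1) j (ev act x u) y)))
     else undefined)"
  by pat_completeness auto
termination
  by (relation "measure (\<lambda>(sg, sv, lb, act, i, j, x, y). nat (2 - i - j))") auto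

end

theory Submission imports Defs begin

fun tg :: "'v list \<Rightarrow> ('g::zero, 'v) U \<Rightarrow> 'g" where
  "tg [] (UG a) = a" | "tg [] (UV w) = 0" | "tg [] (UF f) = 0"
| "tg (u#us) (UF f) = tg us (f u)" | "tg (u#us) (UG a) = 0" | "tg (u#us) (UV w) = 0"

fun tv :: "'v list \<Rightarrow> ('g, 'v::zero) U \<Rightarrow> 'v" where
  "tv [] (UV a) = a" | "tv [] (UG w) = 0" | "tv [] (UF f) = 0"
| "tv (u#us) (UF f) = tv us (f u)" | "tv (u#us) (UG a) = 0" | "tv (u#us) (UV w) = 0"

declare br.simps [simp del]

locale LS =
  fixes sg :: "'k::field \<Rightarrow> 'g::ab_group_add \<Rightarrow> 'g"
    and sv :: "'k \<Rightarrow> 'v::ab_group_add \<Rightarrow> 'v"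
    and lb :: "'g \<Rightarrow> 'g \<Rightarrow> 'g"
    and act :: "'g \<Rightarrow> 'v \<Rightarrow> 'v"
  assumes vg: "vector_space sg" and vv: "vector_space sv"
    and lb_add1: "lb (a + a') b = lb a b + lb a' b"
    and lb_sc1: "lb (sg c a) b = sg c (lb a b)"
    and lb_add2: "lb a (b + b') = lb a b + lb a b'"
    and lb_sc2: "lb a (sg c b) = sg c (lb a b)"
    and lb_alt: "lb a a = 0"
    and lb_jac: "lb a (lb b d) = lb (lb a b) d + lb b (lb a d)"
    and act_add1: "act (a + a') u = act a u + act a' u"
    and act_sc1: "act (sg c a) u = sv c (act a u)"
    and act_add2: "act a (u + w) = act a u + act a w"
    and act_sc2: "act a (sv c u) = sv c (act a u)"
    and act_rep: "act (lb a b) u = act a (act b u) - act b (act a u)"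
begin

interpretation G: vector_space sg by (rule vg)
interpretation V: vector_space sv by (rule vv)

abbreviation C where "C \<equiv> Ucar sg sv"
abbreviation B where "B \<equiv> br sg sv lb act"
abbreviation sc where "sc \<equiv> uscale sg sv"
abbreviation E where "E \<equiv> ev act"

lemma Ucar_1: "C 1 = range UV" by (simp add: Ucar_def)
lemma Ucar_0: "C 0 = range UG" by (simp add: Ucar_def)
lemma Ucar_gt: "k > 1 \<Longrightarrow> C k = {}" by (simp add: Ucar_def)
lemma Ucar_neg: "k \<le> -1 \<Longrightarrow> z \<in> C k \<longleftrightarrow> (\<exists>f. z = UF f \<and> (\<forall>u. f u \<in> C (k+1))
   \<and> (\<forall>u w. f (u+w) = uadd (f u) (f w)) \<and> (\<forall>c u. f (sv c u) = sc c (f u)))"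
proof -
  assume k: "k \<le> -1"
  have "nat (-k) = Suc (nat (-(k+1)))" using k by simp
  thus ?thesis using k by (simp add: Ucar_def)
qed

lemma ext_gen: "nat (-k) = n \<Longrightarrow> z \<in> C k \<Longrightarrow> z' \<in> C k \<Longrightarrow>
   (\<And>us. length us = n \<Longrightarrow> tg us z = tg us z' \<and> tv us z = tv us z') \<Longrightarrow> z = z'"
proof (induction n arbitrary: k z z')
  case 0
  then consider "k = 0" | "k = 1" | "k > 1" by linarith
  then show ?case
  proof cases
    case 1 then show ?thesis using 0(2,3) 0(4)[of "[]"] Ucar_0 by auto
  next
    case 2 then show ?thesis using 0(2,3) 0(4)[of "[]"] Ucar_1 by auto
  next
    case 3 then show ?thesis using 0 Ucar_gt by auto
  qed
next
  case (Suc n)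
  hence k: "k \<le> -1" by linarith
  obtain f where f: "z = UF f" "\<forall>u. f u \<in> C (k+1)" using Suc.prems k Ucar_neg by blast
  obtain h where h: "z' = UF h" "\<forall>u. h u \<in> C (k+1)" using Suc.prems k Ucar_neg by blast
  have "f u = h u" for u
  proof (rule Suc.IH[of "k+1"])
    show "nat (- (k + 1)) = n" using Suc.prems k by linarith
    show "f u \<in> C (k+1)" "h u \<in> C (k+1)" using f h by auto
    fix us :: "'v list" assume "length us = n"
    thus "tg us (f u) = tg us (h u) \<and> tv us (f u) = tv us (h u)"
      using Suc.prems(4)[of "u#us"] f h by simp
  qed
  thus ?case using f h by auto
qed

lemma uext: "z \<in> C k \<Longrightarrow> z' \<in> C k \<Longrightarrow>
   (\<And>us. length us = nat (-k) \<Longrightarrow> tg us z = tg us z' \<and> tv us z = tv us z') \<Longrightarrow> z = z'"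
  using ext_gen by blast

lemma hom_gen: "nat (-k) = n \<Longrightarrow> z \<in> C k \<Longrightarrow> z' \<in> C k \<Longrightarrow> length us = n \<Longrightarrow>
   tg us (uadd z z') = tg us z + tg us z' \<and> tv us (uadd z z') = tv us z + tv us z'
   \<and> tg us (sc c z) = sg c (tg us z) \<and> tv us (sc c z) = sv c (tv us z)"
proof (induction n arbitrary: k z z' us)
  case 0
  then consider "k = 0" | "k = 1" | "k > 1" by linarith
  then show ?case
  proof cases
    case 1 then show ?thesis using 0 Ucar_0 by auto
  next
    case 2 then show ?thesis using 0 Ucar_1 by auto
  next
    case 3 then show ?thesis using 0 Ucar_gt by auto
  qed
next
  case (Suc n)
  hence k: "k \<le> -1" by linarith
  obtain f where f: "z = UF f" "\<forall>u. f u \<in> C (k+1)" using Suc.prems k Ucar_neg by blast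
  obtain h where h: "z' = UF h" "\<forall>u. h u \<in> C (k+1)" using Suc.prems k Ucar_neg by blast
  obtain u vs where us: "us = u # vs" "length vs = n" using Suc.prems by (cases us) auto
  have "nat (- (k + 1)) = n" using Suc.prems k by linarith
  moreover have "f u \<in> C (k+1)" "h u \<in> C (k+1)" using f h by auto
  ultimately have I: "tg vs (uadd (f u) (h u)) = tg vs (f u) + tg vs (h u) \<and> tv vs (uadd (f u) (h u)) = tv vs (f u) + tv vs (h u)
   \<and> tg vs (sc c (f u)) = sg c (tg vs (f u)) \<and> tv vs (sc c (f u)) = sv c (tv vs (f u))"
    using Suc.IH us(2) by blast
  show ?case using I f h us by simp
qed

lemma tg_add: "z \<in> C k \<Longrightarrow> z' \<in> C k \<Longrightarrow> length us = nat (-k) \<Longrightarrow> tg us (uadd z z') = tg us z + tg us z'"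
  using hom_gen by blast
lemma tv_add: "z \<in> C k \<Longrightarrow> z' \<in> C k \<Longrightarrow> length us = nat (-k) \<Longrightarrow> tv us (uadd z z') = tv us z + tv us z'"
  using hom_gen by blast
lemma tg_sc: "z \<in> C k \<Longrightarrow> length us = nat (-k) \<Longrightarrow> tg us (sc c z) = sg c (tg us z)"
  using hom_gen by blast
lemma tv_sc: "z \<in> C k \<Longrightarrow> length us = nat (-k) \<Longrightarrow> tv us (sc c z) = sv c (tv us z)"
  using hom_gen by blast

lemmas TG = tg_add tv_add tg_sc tv_sc

lemma closed_gen: "nat (-k) = n \<Longrightarrow> z \<in> C k \<Longrightarrow> z' \<in> C k \<Longrightarrow>
   uadd z z' \<in> C k \<and> sc c z \<in> C k"
proof (induction n arbitrary: k z z' c)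
  case 0
  then consider "k = 0" | "k = 1" | "k > 1" by linarith
  then show ?case
  proof cases
    case 1 then show ?thesis using 0 Ucar_0 by auto
  next
    case 2 then show ?thesis using 0 Ucar_1 by auto
  next
    case 3 then show ?thesis using 0 Ucar_gt by auto
  qed
next
  case (Suc n)
  hence k: "k \<le> -1" by linarith
  obtain f where f: "z = UF f" "\<forall>u. f u \<in> C (k+1)"  "\<forall>u w. f (u+w) = uadd (f u) (f w)"
     "\<forall>c u. f (sv c u) = sc c (f u)" using Ucar_neg[OF k, THEN iffD1, OF Suc.prems(2)] by blast
  obtain h where h: "z' = UF h" "\<forall>u. h u \<in> C (k+1)"  "\<forall>u w. h (u+w) = uadd (h u) (h w)"
     "\<forall>c u. h (sv c u) = sc c (h u)" using Ucar_neg[OF k, THEN iffD1, OF Suc.prems(3)] by blast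
  have n: "nat (- (k + 1)) = n" using Suc.prems k by linarith
  have A: "\<And>z z'. z \<in> C (k+1) \<Longrightarrow> z' \<in> C (k+1) \<Longrightarrow> uadd z z' \<in> C (k+1)"
    using Suc.IH[OF n] by blast
  have S: "\<And>z c. z \<in> C (k+1) \<Longrightarrow> sc c z \<in> C (k+1)"
    using Suc.IH[OF n] by blast
  have fm: "\<And>u. f u \<in> C (k+1)" "\<And>u. h u \<in> C (k+1)" using f h by auto
  note cl = A S fm
  have "uadd z z' \<in> C k"
  proof -
    have "uadd (uadd (f u) (f w)) (uadd (h u) (h w)) = uadd (uadd (f u) (h u)) (uadd (f w) (h w))" for u w
      apply (rule uext[of _ "k+1"])
      using f h cl by (simp_all add: tg_add[of _ "k+1"] tv_add[of _ "k+1"])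
    moreover have "uadd (sc c (f u)) (sc c (h u)) = sc c (uadd (f u) (h u))" for u c
      apply (rule uext[of _ "k+1"])
      using f h cl by (simp_all add: tg_add[of _ "k+1"] tv_add[of _ "k+1"] tg_sc[of _ "k+1"] tv_sc[of _ "k+1"]
           G.scale_right_distrib V.scale_right_distrib)
    ultimately show ?thesis using f h cl Ucar_neg[OF k] by simp
  qed
  moreover have "sc c z \<in> C k"
  proof -
    have "sc c (uadd (f u) (f w)) = uadd (sc c (f u)) (sc c (f w))" for u w
      apply (rule uext[of _ "k+1"])
      using f h cl by (simp_all add: tg_add[of _ "k+1"] tv_add[of _ "k+1"] tg_sc[of _ "k+1"] tv_sc[of _ "k+1"]
           G.scale_right_distrib V.scale_right_distrib)
    moreover have "sc c (sc d (f u)) = sc d (sc c (f u))" for u d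
      apply (rule uext[of _ "k+1"])
      using f h cl by (simp_all add: tg_sc[of _ "k+1"] tv_sc[of _ "k+1"] mult.commute)
    ultimately show ?thesis using f h cl Ucar_neg[OF k] by simp
  qed
  ultimately show ?case by blast
qed

lemma add_closed: "z \<in> C k \<Longrightarrow> z' \<in> C k \<Longrightarrow> uadd z z' \<in> C k"
  using closed_gen by blast
lemma sc_closed: "z \<in> C k \<Longrightarrow> sc c z \<in> C k"
  using closed_gen by blast


lemma uadd_comm: "a \<in> C k \<Longrightarrow> b \<in> C k \<Longrightarrow> uadd a b = uadd b a"
  by (rule uext[of _ k]) (simp_all add: add_closed tg_add[of _ k] tv_add[of _ k] add.commute)
lemma uadd_assoc: "a \<in> C k \<Longrightarrow> b \<in> C k \<Longrightarrow> c \<in> C k \<Longrightarrow> uadd (uadd a b) c = uadd a (uadd b c)"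
  by (rule uext[of _ k]) (simp_all add: add_closed tg_add[of _ k] tv_add[of _ k] add.assoc)
lemma sc_uadd: "a \<in> C k \<Longrightarrow> b \<in> C k \<Longrightarrow> sc c (uadd a b) = uadd (sc c a) (sc c b)"
  by (rule uext[of _ k]) (simp_all add: add_closed sc_closed tg_add[of _ k] tv_add[of _ k]
     tg_sc[of _ k] tv_sc[of _ k] G.scale_right_distrib V.scale_right_distrib)
lemma sc_sc: "a \<in> C k \<Longrightarrow> sc c (sc d a) = sc (c * d) a"
  by (rule uext[of _ k]) (simp_all add: sc_closed tg_sc[of _ k] tv_sc[of _ k])
lemma sc_one: "a \<in> C k \<Longrightarrow> sc 1 a = a"
  by (rule uext[of _ k]) (simp_all add: sc_closed tg_sc[of _ k] tv_sc[of _ k])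

lemma sgp: "sg (psign k) a = (if even k then a else - a)"
  by (simp add: psign_def)
lemma sgm: "sg (- psign k) a = (if even k then - a else a)"
  by (simp add: psign_def)
lemma svp: "sv (psign k) a = (if even k then a else - a)"
  by (simp add: psign_def)
lemma svm: "sv (- psign k) a = (if even k then - a else a)"
  by (simp add: psign_def)

lemma ev_closed: "x \<in> C i \<Longrightarrow> i \<le> 0 \<Longrightarrow> E x u \<in> C (i+1)"
proof -
  assume x: "x \<in> C i" and i: "i \<le> 0"
  show ?thesis
  proof (cases "i = 0")
    case True thus ?thesis using x by (auto simp: Ucar_0 Ucar_1)
  next
    case False hence "i \<le> -1" using i by simp
    thus ?thesis using x Ucar_neg by fastforce
  qed
qed

lemma ev_lin: assumes x: "x \<in> C i" and i: "i \<le> 0"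
  shows "E x (u + w) = uadd (E x u) (E x w)" "E x (sv c u) = sc c (E x u)"
proof -
  have "E x (u + w) = uadd (E x u) (E x w) \<and> E x (sv c u) = sc c (E x u)"
  proof (cases "i = 0")
    case True thus ?thesis using x by (auto simp: Ucar_0 act_add2 act_sc2)
  next
    case False hence k: "i \<le> -1" using i by simp
    show ?thesis using Ucar_neg[OF k, THEN iffD1, OF x] by auto
  qed
  thus "E x (u + w) = uadd (E x u) (E x w)" "E x (sv c u) = sc c (E x u)" by auto
qed

lemma ev_lin1: assumes x: "x \<in> C i" and x': "x' \<in> C i" and i: "i \<le> 0"
  shows "E (uadd x x') u = uadd (E x u) (E x' u)" "E (sc c x) u = sc c (E x u)"
proof -
  have "E (uadd x x') u = uadd (E x u) (E x' u) \<and> E (sc c x) u = sc c (E x u)"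
  proof (cases "i = 0")
    case True thus ?thesis using x x' by (auto simp: Ucar_0 act_add1 act_sc1)
  next
    case False hence k: "i \<le> -1" using i by simp
    obtain f where "x = UF f" using Ucar_neg[OF k, THEN iffD1, OF x] by blast
    moreover obtain h where "x' = UF h" using Ucar_neg[OF k, THEN iffD1, OF x'] by blast
    ultimately show ?thesis by simp
  qed
  thus "E (uadd x x') u = uadd (E x u) (E x' u)" "E (sc c x) u = sc c (E x u)" by auto
qed

lemma ev_sc1: "x \<in> C i \<Longrightarrow> i \<le> 0 \<Longrightarrow> E (sc c x) u = sc c (E x u)"
  using ev_lin1(2) by blast
lemma ev_add1: "x \<in> C i \<Longrightarrow> x' \<in> C i \<Longrightarrow> i \<le> 0 \<Longrightarrow> E (uadd x x') u = uadd (E x u) (E x' u)"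
  using ev_lin1(1) by blast

lemma ext_ev: assumes "z \<in> C k" "z' \<in> C k" "k \<le> -1" "\<And>u. E z u = E z' u" shows "z = z'"
proof -
  obtain f where "z = UF f" using Ucar_neg[OF assms(3), THEN iffD1, OF assms(1)] by blast
  moreover obtain h where "z' = UF h" using Ucar_neg[OF assms(3), THEN iffD1, OF assms(2)] by blast
  ultimately show ?thesis using assms(4) by auto
qed

lemma br00: "B 0 0 (UG a) (UG b) = UG (lb a b)"
  by (subst br.simps) simp
lemma brX1: "i \<le> 0 \<Longrightarrow> B i 1 x (UV w) = E x w"
  by (subst br.simps) simp
lemma br1X: "j \<le> 0 \<Longrightarrow> B 1 j (UV w) y = sc (- psign j) (E y w)"
  by (subst br.simps) simp
lemma brrec: "i \<le> 0 \<Longrightarrow> j \<le> 0 \<Longrightarrow> i + j < 0 \<Longrightarrow>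
  B i j x y = UF (\<lambda>u. uadd (B i (j+1) x (E y u)) (sc (psign j) (B (i+1) j (E x u) y)))"
  by (subst br.simps) simp


definition "Cl i j \<equiv> \<forall>x y. x \<in> C i \<longrightarrow> y \<in> C j \<longrightarrow> B i j x y \<in> C (i + j)"
definition "L1 i j \<equiv> \<forall>x x' y c. x \<in> C i \<longrightarrow> x' \<in> C i \<longrightarrow> y \<in> C j \<longrightarrow>
   B i j (uadd x x') y = uadd (B i j x y) (B i j x' y) \<and> B i j (sc c x) y = sc c (B i j x y)"
definition "L2 i j \<equiv> \<forall>x y y' c. x \<in> C i \<longrightarrow> y \<in> C j \<longrightarrow> y' \<in> C j \<longrightarrow>
   B i j x (uadd y y') = uadd (B i j x y) (B i j x y') \<and> B i j x (sc c y) = sc c (B i j x y)"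

lemma P_rec:
  assumes i0: "i \<le> 0" and j0: "j \<le> 0" and neg: "i + j < 0"
    and IH: "Cl i (j+1) \<and> L1 i (j+1) \<and> L2 i (j+1) \<and> Cl (i+1) j \<and> L1 (i+1) j \<and> L2 (i+1) j"
  shows "Cl i j \<and> L1 i j \<and> L2 i j"
proof -
  define K where "K = i + j + 1"
  have K: "i + (j + 1) = K" "i + 1 + j = K" "i + j \<le> -1" "K \<le> 0" "i + j + 1 = K" using neg by (auto simp: K_def)
  have c1: "\<And>x y. x \<in> C i \<Longrightarrow> y \<in> C (j+1) \<Longrightarrow> B i (j+1) x y \<in> C K"
    using IH K unfolding Cl_def by metis
  have c2: "\<And>x y. x \<in> C (i+1) \<Longrightarrow> y \<in> C j \<Longrightarrow> B (i+1) j x y \<in> C K"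
    using IH K unfolding Cl_def by metis
  have l1: "\<And>x x' y. x \<in> C i \<Longrightarrow> x' \<in> C i \<Longrightarrow> y \<in> C (j+1) \<Longrightarrow>
      B i (j+1) (uadd x x') y = uadd (B i (j+1) x y) (B i (j+1) x' y)"
    "\<And>x y c. x \<in> C i \<Longrightarrow> y \<in> C (j+1) \<Longrightarrow> B i (j+1) (sc c x) y = sc c (B i (j+1) x y)"
    using IH unfolding L1_def by blast+
  have l2: "\<And>x y y'. x \<in> C i \<Longrightarrow> y \<in> C (j+1) \<Longrightarrow> y' \<in> C (j+1) \<Longrightarrow>
      B i (j+1) x (uadd y y') = uadd (B i (j+1) x y) (B i (j+1) x y')"
    "\<And>x y c. x \<in> C i \<Longrightarrow> y \<in> C (j+1) \<Longrightarrow> B i (j+1) x (sc c y) = sc c (B i (j+1) x y)"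
    using IH unfolding L2_def by blast+
  have m1: "\<And>x x' y. x \<in> C (i+1) \<Longrightarrow> x' \<in> C (i+1) \<Longrightarrow> y \<in> C j \<Longrightarrow>
      B (i+1) j (uadd x x') y = uadd (B (i+1) j x y) (B (i+1) j x' y)"
    "\<And>x y c. x \<in> C (i+1) \<Longrightarrow> y \<in> C j \<Longrightarrow> B (i+1) j (sc c x) y = sc c (B (i+1) j x y)"
    using IH unfolding L1_def by blast+
  have m2: "\<And>x y y'. x \<in> C (i+1) \<Longrightarrow> y \<in> C j \<Longrightarrow> y' \<in> C j \<Longrightarrow>
      B (i+1) j x (uadd y y') = uadd (B (i+1) j x y) (B (i+1) j x y')"
    "\<And>x y c. x \<in> C (i+1) \<Longrightarrow> y \<in> C j \<Longrightarrow> B (i+1) j x (sc c y) = sc c (B (i+1) j x y)"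
    using IH unfolding L2_def by blast+
  note br = brrec[OF i0 j0 neg]
  note cl = c1 c2 ev_closed add_closed sc_closed i0 j0
  have CL: "B i j x y \<in> C (i + j)" if x: "x \<in> C i" and y: "y \<in> C j" for x y
  proof -
    have "\<forall>u w. uadd (B i (j+1) x (E y (u+w))) (sc (psign j) (B (i+1) j (E x (u+w)) y))
       = uadd (uadd (B i (j+1) x (E y u)) (sc (psign j) (B (i+1) j (E x u) y)))
              (uadd (B i (j+1) x (E y w)) (sc (psign j) (B (i+1) j (E x w) y)))"
    proof (intro allI)
      fix u w
      show "uadd (B i (j+1) x (E y (u+w))) (sc (psign j) (B (i+1) j (E x (u+w)) y))
       = uadd (uadd (B i (j+1) x (E y u)) (sc (psign j) (B (i+1) j (E x u) y)))
              (uadd (B i (j+1) x (E y w)) (sc (psign j) (B (i+1) j (E x w) y)))"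
        apply (simp add: ev_lin[OF x i0] ev_lin[OF y j0] l2 m1 cl x y)
        apply (rule uext[of _ K])
        apply (simp_all add: cl x y TG[of _ K])
        apply (simp_all add: add_ac G.scale_right_distrib V.scale_right_distrib mult.commute)
        done
    qed
    moreover have "\<forall>c u. uadd (B i (j+1) x (E y (sv c u))) (sc (psign j) (B (i+1) j (E x (sv c u)) y))
       = sc c (uadd (B i (j+1) x (E y u)) (sc (psign j) (B (i+1) j (E x u) y)))"
    proof (intro allI)
      fix c u
      show "uadd (B i (j+1) x (E y (sv c u))) (sc (psign j) (B (i+1) j (E x (sv c u)) y))
       = sc c (uadd (B i (j+1) x (E y u)) (sc (psign j) (B (i+1) j (E x u) y)))"
        apply (simp add: ev_lin[OF x i0] ev_lin[OF y j0] l2 m1 cl x y)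
        apply (rule uext[of _ K])
        apply (simp_all add: cl x y TG[of _ K])
        apply (simp_all add: add_ac G.scale_right_distrib V.scale_right_distrib mult.commute)
        done
    qed
    moreover have "\<forall>u. uadd (B i (j+1) x (E y u)) (sc (psign j) (B (i+1) j (E x u) y)) \<in> C K"
      by (simp add: cl x y)
    ultimately show ?thesis unfolding br using Ucar_neg[OF K(3)] K(5) by simp
  qed
  have LL1: "B i j (uadd x x') y = uadd (B i j x y) (B i j x' y) \<and> B i j (sc c x) y = sc c (B i j x y)"
    if x: "x \<in> C i" and x': "x' \<in> C i" and y: "y \<in> C j" for x x' y c
  proof
    show "B i j (uadd x x') y = uadd (B i j x y) (B i j x' y)"
      unfolding br
      apply simp
      apply (rule HOL.ext)
      apply (simp add: ev_lin1[OF x x' i0] l1 m1 cl x x' y)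
      apply (rule uext[of _ K])
      apply (simp_all add: cl x x' y TG[of _ K])
        apply (simp_all add: add_ac G.scale_right_distrib V.scale_right_distrib mult.commute)
        done
    show "B i j (sc c x) y = sc c (B i j x y)"
      unfolding br
      apply simp
      apply (rule HOL.ext)
      apply (simp add: ev_lin1[OF x x' i0] l1 m1 cl x x' y)
      apply (rule uext[of _ K])
      apply (simp_all add: cl x x' y TG[of _ K])
        apply (simp_all add: add_ac G.scale_right_distrib V.scale_right_distrib mult.commute)
        done
  qed
  have LL2: "B i j x (uadd y y') = uadd (B i j x y) (B i j x y') \<and> B i j x (sc c y) = sc c (B i j x y)"
    if x: "x \<in> C i" and y: "y \<in> C j" and y': "y' \<in> C j" for x y y' c
  proof
    show "B i j x (uadd y y') = uadd (B i j x y) (B i j x y')"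
      unfolding br
      apply simp
      apply (rule HOL.ext)
      apply (simp add: ev_lin1[OF y y' j0] l2 m2 cl x y' y)
      apply (rule uext[of _ K])
      apply (simp_all add: cl x y y' TG[of _ K])
        apply (simp_all add: add_ac G.scale_right_distrib V.scale_right_distrib mult.commute)
        done
    show "B i j x (sc c y) = sc c (B i j x y)"
      unfolding br
      apply simp
      apply (rule HOL.ext)
      apply (simp add: ev_lin1[OF y y' j0] l2 m2 cl x y y')
      apply (rule uext[of _ K])
      apply (simp_all add: cl x y y' TG[of _ K])
        apply (simp_all add: add_ac G.scale_right_distrib V.scale_right_distrib mult.commute)
        done
  qed
  show ?thesis unfolding Cl_def L1_def L2_def using CL LL1 LL2 by blast
qed


lemma P_base: assumes ij: "i + j \<le> 1" and nr: "\<not> (i \<le> 0 \<and> j \<le> 0 \<and> i + j < 0)"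
  shows "Cl i j \<and> L1 i j \<and> L2 i j"
proof -
  consider "i > 1" | "j > 1" | "i = 1" "j \<le> 0" | "j = 1" "i \<le> 0" | "i = 0" "j = 0"
    using ij nr by linarith
  then show ?thesis
  proof cases
    case 1 thus ?thesis unfolding Cl_def L1_def L2_def using Ucar_gt by auto
  next
    case 2 thus ?thesis unfolding Cl_def L1_def L2_def using Ucar_gt by auto
  next
    case 3
    have j0: "j \<le> 0" using 3 by simp
    have cm: "1 + j = j + 1" by simp
    show ?thesis unfolding Cl_def L1_def L2_def 3(1)
    proof (intro conjI allI impI)
      fix x y assume "x \<in> C 1" "y \<in> C j"
      thus "B 1 j x y \<in> C (1 + j)" unfolding cm using j0
        by (auto simp: Ucar_1 br1X intro!: sc_closed ev_closed)
    next
      fix x x' y c assume x: "x \<in> C 1" and x': "x' \<in> C 1" and y: "y \<in> C j"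
      obtain w where w: "x = UV w" using x Ucar_1 by auto
      obtain w' where w': "x' = UV w'" using x' Ucar_1 by auto
      show "B 1 j (uadd x x') y = uadd (B 1 j x y) (B 1 j x' y)"
        using j0 y by (simp add: w w' br1X ev_lin[OF y j0] sc_uadd[of _ "j+1"] ev_closed)
      show "B 1 j (sc c x) y = sc c (B 1 j x y)"
        using j0 y by (simp add: w br1X ev_lin[OF y j0] sc_sc[of _ "j+1"] ev_closed mult.commute)
    next
      fix x y y' c assume x: "x \<in> C 1" and y: "y \<in> C j" and y': "y' \<in> C j"
      obtain w where w: "x = UV w" using x Ucar_1 by auto
      show "B 1 j x (uadd y y') = uadd (B 1 j x y) (B 1 j x y')"
        using j0 y y' by (simp add: w br1X ev_lin1[OF y y' j0] sc_uadd[of _ "j+1"] ev_closed)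
      show "B 1 j x (sc c y) = sc c (B 1 j x y)"
        using j0 y by (simp add: w br1X ev_lin1[OF y y' j0] sc_sc[of _ "j+1"] ev_closed mult.commute)
    qed
  next
    case 4
    have i0: "i \<le> 0" using 4 by simp
    show ?thesis unfolding Cl_def L1_def L2_def 4(1)
    proof (intro conjI allI impI)
      fix x y assume "x \<in> C i" "y \<in> C 1"
      thus "B i 1 x y \<in> C (i + 1)" using i0
        by (auto simp: Ucar_1 brX1 intro!: ev_closed)
    next
      fix x x' y c assume x: "x \<in> C i" and x': "x' \<in> C i" and y: "y \<in> C 1"
      obtain w where w: "y = UV w" using y Ucar_1 by auto
      show "B i 1 (uadd x x') y = uadd (B i 1 x y) (B i 1 x' y)"
        by (simp add: w brX1 i0 ev_lin1[OF x x' i0])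
      show "B i 1 (sc c x) y = sc c (B i 1 x y)"
        by (simp add: w brX1 i0 ev_lin1[OF x x' i0])
    next
      fix x y y' c assume x: "x \<in> C i" and y: "y \<in> C 1" and y': "y' \<in> C 1"
      obtain w where w: "y = UV w" using y Ucar_1 by auto
      obtain w' where w': "y' = UV w'" using y' Ucar_1 by auto
      show "B i 1 x (uadd y y') = uadd (B i 1 x y) (B i 1 x y')"
        by (simp add: w w' brX1 i0 ev_lin[OF x i0])
      show "B i 1 x (sc c y) = sc c (B i 1 x y)"
        by (simp add: w brX1 i0 ev_lin[OF x i0])
    qed
  next
    case 5
    show ?thesis unfolding Cl_def L1_def L2_def 5
      by (auto simp: Ucar_0 br00 lb_add1 lb_add2 lb_sc1 lb_sc2)
  qed
qed

lemma P_all_gen: "nat (1 - (i + j)) = n \<Longrightarrow> i + j \<le> 1 \<Longrightarrow> Cl i j \<and> L1 i j \<and> L2 i j"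
proof (induction n arbitrary: i j rule: less_induct)
  case (less n)
  show ?case
  proof (cases "i \<le> 0 \<and> j \<le> 0 \<and> i + j < 0")
    case True
    have a: "Cl i (j+1) \<and> L1 i (j+1) \<and> L2 i (j+1)"
      by (rule less.IH[of "nat (1 - (i + (j+1)))"]) (use less.prems True in auto)
    have b: "Cl (i+1) j \<and> L1 (i+1) j \<and> L2 (i+1) j"
      by (rule less.IH[of "nat (1 - (i + 1 + j))"]) (use less.prems True in auto)
    show ?thesis using P_rec a b True by blast
  next
    case False thus ?thesis using P_base less.prems by blast
  qed
qed

lemma br_closed: "x \<in> C i \<Longrightarrow> y \<in> C j \<Longrightarrow> i + j \<le> 1 \<Longrightarrow> m = i + j \<Longrightarrow> B i j x y \<in> C m"
  using P_all_gen[of i j] unfolding Cl_def by blast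
lemma br_add1: "x \<in> C i \<Longrightarrow> x' \<in> C i \<Longrightarrow> y \<in> C j \<Longrightarrow> i + j \<le> 1 \<Longrightarrow>
   B i j (uadd x x') y = uadd (B i j x y) (B i j x' y)"
  using P_all_gen[of i j] unfolding L1_def by blast
lemma br_sc1: "x \<in> C i \<Longrightarrow> y \<in> C j \<Longrightarrow> i + j \<le> 1 \<Longrightarrow>
   B i j (sc c x) y = sc c (B i j x y)"
  using P_all_gen[of i j] unfolding L1_def by blast
lemma br_add2: "x \<in> C i \<Longrightarrow> y \<in> C j \<Longrightarrow> y' \<in> C j \<Longrightarrow> i + j \<le> 1 \<Longrightarrow>
   B i j x (uadd y y') = uadd (B i j x y) (B i j x y')"
  using P_all_gen[of i j] unfolding L2_def by blast
lemma br_sc2: "x \<in> C i \<Longrightarrow> y \<in> C j \<Longrightarrow> i + j \<le> 1 \<Longrightarrow>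
   B i j x (sc c y) = sc c (B i j x y)"
  using P_all_gen[of i j] unfolding L2_def by blast
lemma ev_closed': "x \<in> C i \<Longrightarrow> i \<le> 0 \<Longrightarrow> m = i + 1 \<Longrightarrow> E x u \<in> C m"
  using ev_closed by blast


lemma psign_sq: "psign k * psign k = (1::'k)"
  by (simp add: psign_def)

lemma psign_mult: "psign a * psign b = (psign (a + b) :: 'k)"
  by (simp add: psign_def)

lemmas parity = even_mult_iff even_add psign_mult

lemma lb_anti: "lb a b = - lb b a"
proof -
  have "lb (a + b) (a + b) = lb a a + lb a b + (lb b a + lb b b)" by (simp add: lb_add1 lb_add2 add_ac)
  hence "lb a b + lb b a = 0" by (simp add: lb_alt)
  thus ?thesis by (simp add: eq_neg_iff_add_eq_0)
qed

lemma anti_gen: "nat (1 - (i + j)) = n \<Longrightarrow> i + j \<le> 1 \<Longrightarrow> x \<in> C i \<Longrightarrow> y \<in> C j \<Longrightarrow>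
   B i j x y = sc (- psign (i * j)) (B j i y x)"
proof (induction n arbitrary: i j x y rule: less_induct)
  case (less n)
  note xy = less.prems(3,4)
  consider "i > 1" | "j > 1" | "i = 1" "j \<le> 0" | "j = 1" "i \<le> 0" | "i = 0" "j = 0"
    | "i \<le> 0" "j \<le> 0" "i + j < 0"
    using less.prems by linarith
  then show ?case
  proof cases
    case 1 thus ?thesis using xy Ucar_gt by auto
  next
    case 2 thus ?thesis using xy Ucar_gt by auto
  next
    case 3
    obtain w where w: "x = UV w" using xy 3 Ucar_1 by auto
    show ?thesis using 3 by (simp add: w br1X brX1)
  next
    case 4
    obtain w where w: "y = UV w" using xy 4 Ucar_1 by auto
    have "E x w \<in> C (i + 1)" using ev_closed xy 4 by auto
    thus ?thesis using 4 by (simp add: w br1X brX1 sc_sc[of _ "i+1"] psign_sq sc_one[of _ "i+1"])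
  next
    case 5
    obtain a where a: "x = UG a" using xy 5 Ucar_0 by auto
    obtain b where b: "y = UG b" using xy 5 Ucar_0 by auto
    show ?thesis using 5 by (simp add: a b br00 psign_def lb_anti[of a b])
  next
    case 6
    define K where "K = i + j + 1"
    have K: "K \<le> 0" using 6 by (simp add: K_def)
    have IH1: "B i (j+1) x (E y u) = sc (- psign (i * (j+1))) (B (j+1) i (E y u) x)" for u
      by (rule less.IH[of "nat (1 - (i + (j+1)))"]) (use less.prems 6 ev_closed in auto)
    have IH2: "B (i+1) j (E x u) y = sc (- psign ((i+1) * j)) (B j (i+1) y (E x u))" for u
      by (rule less.IH[of "nat (1 - (i + 1 + j))"]) (use less.prems 6 ev_closed in auto)
    have m: "B (j+1) i (E y u) x \<in> C K" "B j (i+1) y (E x u) \<in> C K" for u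
      using xy 6 by (auto simp: K_def intro!: br_closed ev_closed')
    have "j + i < 0" using 6 by simp
    note br1 = brrec[OF 6] brrec[OF 6(2,1) this]
    show ?thesis
      unfolding br1
      apply (simp add: IH1 IH2)
      apply (rule HOL.ext)
      apply (rule uext[of _ K])
        apply (simp_all add: m add_closed sc_closed TG[of _ K])
      apply (simp_all add: sgp sgm svp svm parity G.scale_right_distrib V.scale_right_distrib)
      done
  qed
qed

lemma anti: "i + j \<le> 1 \<Longrightarrow> x \<in> C i \<Longrightarrow> y \<in> C j \<Longrightarrow> B i j x y = sc (- psign (i * j)) (B j i y x)"
  using anti_gen by blast

lemma Dlem: "x \<in> C i \<Longrightarrow> z \<in> C k \<Longrightarrow> i \<le> 0 \<Longrightarrow> k \<le> 0 \<Longrightarrow>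
   E (B i k x z) w = uadd (B i (k+1) x (E z w)) (sc (psign k) (B (i+1) k (E x w) z))"
proof (cases "i = 0 \<and> k = 0")
  case True
  assume x: "x \<in> C i" and z: "z \<in> C k"
  obtain a where a: "x = UG a" using x True Ucar_0 by auto
  obtain b where b: "z = UG b" using z True Ucar_0 by auto
  show ?thesis using True by (simp add: a b br00 brX1 br1X psign_def act_rep)
next
  case False
  assume "i \<le> 0" "k \<le> 0"
  hence "i + k < 0" using False by linarith
  thus ?thesis using \<open>i \<le> 0\<close> \<open>k \<le> 0\<close> by (simp add: brrec)
qed


definition "Jac i j k \<equiv> \<forall>x y z. x \<in> C i \<longrightarrow> y \<in> C j \<longrightarrow> z \<in> C k \<longrightarrow>
  uadd (B i (j + k) x (B j k y z)) (sc (- psign (i * j)) (B j (i + k) y (B i k x z)))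
  = B (i + j) k (B i j x y) z"

lemmas memb = br_closed add_closed sc_closed
lemmas signs = sgp sgm svp svm parity G.scale_right_distrib V.scale_right_distrib

lemma J_B1: assumes i0: "i \<le> 0" and j0: "j \<le> 0" shows "Jac i j 1"
  unfolding Jac_def
proof (intro allI impI)
  fix x y z assume x: "x \<in> C i" and y: "y \<in> C j" and z: "z \<in> C 1"
  obtain w where w: "z = UV w" using z Ucar_1 by auto
  define K where "K = i + j + 1"
  have a: "B (i+1) j (E x w) y = sc (- psign ((i+1)*j)) (B j (i+1) y (E x w))"
    by (rule anti) (use i0 j0 x y ev_closed in auto)
  show "uadd (B i (j + 1) x (B j 1 y z)) (sc (- psign (i * j)) (B j (i + 1) y (B i 1 x z)))
      = B (i + j) 1 (B i j x y) z"
    unfolding w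
    apply (insert i0 j0)
    apply (simp add: brX1 Dlem x y a)
    apply (rule uext[of _ K])
      apply (simp_all add: memb x y ev_closed'[OF x i0] ev_closed'[OF y j0] K_def TG[of _ K])
    apply (auto simp: signs)
    apply (auto simp: psign_def parity)?
    done
qed

lemma J_B2: assumes i0: "i \<le> 0" and k0: "k \<le> 0" and ik: "i + k \<le> 0" shows "Jac i 1 k"
  unfolding Jac_def
proof (intro allI impI)
  fix x y z assume x: "x \<in> C i" and y: "y \<in> C 1" and z: "z \<in> C k"
  obtain w where w: "y = UV w" using y Ucar_1 by auto
  define K where "K = i + k + 1"
  have e: "1 + k = k + 1" "i + 1 = 1 + i" by simp_all
  show "uadd (B i (1 + k) x (B 1 k y z)) (sc (- psign (i * 1)) (B 1 (i + k) y (B i k x z)))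
      = B (i + 1) k (B i 1 x y) z"
    unfolding w e(1)
    apply (insert i0 k0 ik)
    apply (simp add: brX1 br1X Dlem x z br_sc2 memb ev_closed'[OF x i0] ev_closed'[OF z k0])
    apply (rule uext[of _ K])
      apply (simp_all add: memb x z ev_closed'[OF x i0] ev_closed'[OF z k0] K_def TG[of _ K])
    apply (auto simp: signs)
    apply (auto simp: psign_def parity)?
    done
qed

lemma J_B3: assumes j0: "j \<le> 0" and k0: "k \<le> 0" and jk: "j + k \<le> 0" shows "Jac 1 j k"
  unfolding Jac_def
proof (intro allI impI)
  fix x y z assume x: "x \<in> C 1" and y: "y \<in> C j" and z: "z \<in> C k"
  obtain w where w: "x = UV w" using x Ucar_1 by auto
  define K where "K = j + k + 1"
  have e: "1 + k = k + 1" "1 + j = j + 1" by simp_all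
  show "uadd (B 1 (j + k) x (B j k y z)) (sc (- psign (1 * j)) (B j (1 + k) y (B 1 k x z)))
      = B (1 + j) k (B 1 j x y) z"
    unfolding w e
    apply (insert j0 k0 jk)
    apply (simp add: br1X Dlem y z br_sc2 br_sc1 memb ev_closed'[OF y j0] ev_closed'[OF z k0])
    apply (rule uext[of _ K])
      apply (simp_all add: memb y z ev_closed'[OF y j0] ev_closed'[OF z k0] K_def TG[of _ K])
    apply (auto simp: signs)
    apply (auto simp: psign_def parity)?
    done
qed

lemma J_A0: "Jac 0 0 0"
  unfolding Jac_def
proof (intro allI impI)
  fix x y z assume x: "x \<in> C 0" and y: "y \<in> C 0" and z: "z \<in> C 0"
  obtain a where a: "x = UG a" using x Ucar_0 by auto
  obtain b where b: "y = UG b" using y Ucar_0 by auto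
  obtain d where d: "z = UG d" using z Ucar_0 by auto
  show "uadd (B 0 (0 + 0) x (B 0 0 y z)) (sc (- psign (0 * 0)) (B 0 (0 + 0) y (B 0 0 x z))) =
       B (0 + 0) 0 (B 0 0 x y) z"
    by (simp add: a b d br00 psign_def lb_jac[of a b d])
qed


lemma J_A1: assumes i0: "i \<le> 0" and j0: "j \<le> 0" and k0: "k \<le> 0" and neg: "i + j + k \<le> -1"
  and IH1: "Jac i j (k+1)" and IH2: "Jac i (j+1) k" and IH3: "Jac (i+1) j k"
  shows "Jac i j k"
  unfolding Jac_def
proof (intro allI impI)
  fix x y z assume x: "x \<in> C i" and y: "y \<in> C j" and z: "z \<in> C k"
  define S where "S = i + j + k"
  define K where "K = i + j + k + 1"
  note hyps = i0 j0 k0 neg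
  have eqs: "j + (k+1) = j + k + 1" "i + (k+1) = i + k + 1" "j + 1 + k = j + k + 1"
    "i + 1 + k = i + k + 1" "i + (j+1) = i + j + 1" "i + 1 + j = i + j + 1" by simp_all
  note mx = ev_closed'[OF x i0] and my = ev_closed'[OF y j0] and mz = ev_closed'[OF z k0]
  show "uadd (B i (j + k) x (B j k y z)) (sc (- psign (i * j)) (B j (i + k) y (B i k x z))) =
        B (i + j) k (B i j x y) z"
  proof (rule ext_ev[of _ S])
    show "uadd (B i (j + k) x (B j k y z)) (sc (- psign (i * j)) (B j (i + k) y (B i k x z))) \<in> C S"
      using hyps by (simp add: S_def memb x y z)
    show "B (i + j) k (B i j x y) z \<in> C S"
      using hyps by (simp add: S_def memb x y z)
    show "S \<le> -1" using neg by (simp add: S_def)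
    fix w
    have J1: "uadd (B i (j + k + 1) x (B j (k+1) y (E z w))) (sc (- psign (i * j)) (B j (i + k + 1) y (B i (k+1) x (E z w))))
       = B (i + j) (k+1) (B i j x y) (E z w)"
      using IH1[unfolded Jac_def, rule_format, OF x y mz[OF refl]] by (simp only: eqs)
    have J2: "uadd (B i (j + k + 1) x (B (j+1) k (E y w) z)) (sc (- psign (i * (j+1))) (B (j+1) (i + k) (E y w) (B i k x z)))
       = B (i + j + 1) k (B i (j+1) x (E y w)) z"
      using IH2[unfolded Jac_def, rule_format, OF x my[OF refl] z] by (simp only: eqs)
    have J3: "uadd (B (i+1) (j + k) (E x w) (B j k y z)) (sc (- psign ((i+1) * j)) (B j (i + k + 1) y (B (i+1) k (E x w) z)))
       = B (i + j + 1) k (B (i+1) j (E x w) y) z"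
      using IH3[unfolded Jac_def, rule_format, OF mx[OF refl] y z] by (simp only: eqs)
    show "E (uadd (B i (j + k) x (B j k y z)) (sc (- psign (i * j)) (B j (i + k) y (B i k x z)))) w =
          E (B (i + j) k (B i j x y) z) w"
      apply (insert hyps)
      apply (simp add: ev_add1[where i = S] ev_sc1[where i = S] S_def Dlem br_add1 br_add2 br_sc1 br_sc2 memb x y z mx my mz
          J1[symmetric] J2[symmetric] J3[symmetric])
      apply (rule uext[of _ K])
        apply (simp_all add: memb x y z mx my mz K_def TG[of _ K])
      apply (auto simp: signs)
      apply (auto simp: psign_def parity)?
      done
  qed
qed

lemma J_all_gen: "nat (1 - (i + j + k)) = n \<Longrightarrow> i + j \<le> 1 \<Longrightarrow> j + k \<le> 1 \<Longrightarrow> i + k \<le> 1 \<Longrightarrow>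
   i + j + k \<le> 1 \<Longrightarrow> Jac i j k"
proof (induction n arbitrary: i j k rule: less_induct)
  case (less n)
  consider "i > 1 \<or> j > 1 \<or> k > 1" | "i = 1" | "j = 1" | "k = 1"
    | "i = 0" "j = 0" "k = 0" | "i \<le> 0" "j \<le> 0" "k \<le> 0" "i + j + k \<le> -1"
    using less.prems by linarith
  then show ?case
  proof cases
    case 1 thus ?thesis unfolding Jac_def using Ucar_gt by auto
  next
    case 2 thus ?thesis using J_B3[of j k] less.prems by simp
  next
    case 3 thus ?thesis using J_B2[of i k] less.prems by simp
  next
    case 4 thus ?thesis using J_B1[of i j] less.prems by simp
  next
    case 5 thus ?thesis using J_A0 by simp
  next
    case 6
    have a: "Jac i j (k+1)" by (rule less.IH[of "nat (1 - (i + j + (k+1)))"]) (use less.prems 6 in auto)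
    have b: "Jac i (j+1) k" by (rule less.IH[of "nat (1 - (i + (j+1) + k))"]) (use less.prems 6 in auto)
    have c: "Jac (i+1) j k" by (rule less.IH[of "nat (1 - (i + 1 + j + k))"]) (use less.prems 6 in auto)
    show ?thesis using J_A1[OF 6 a b c] .
  qed
qed


lemma last_claim: "\<phi> \<in> C (-1) \<Longrightarrow>
   E (B 0 (-1) (UG a) \<phi>) u = uadd (B 0 0 (UG a) (E \<phi> u)) (sc (-1) (E \<phi> (act a u)))"
proof -
  assume p: "\<phi> \<in> C (-1)"
  have m: "E \<phi> v \<in> C 0" for v using ev_closed'[OF p] by simp
  have "psign (-1) = (-1::'k)" by (simp add: psign_def)
  thus ?thesis by (simp add: brrec br1X sc_sc[OF m] sc_one)
qed

lemma all_claims: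
  shows
    "(\<forall>i j x y. i + j \<le> 1 \<longrightarrow> x \<in> C i \<longrightarrow> y \<in> C j \<longrightarrow> B i j x y \<in> C (i + j))
   \<and> (\<forall>i j x x' y c. i + j \<le> 1 \<longrightarrow> x \<in> C i \<longrightarrow> x' \<in> C i \<longrightarrow> y \<in> C j \<longrightarrow>
        B i j (uadd x x') y = uadd (B i j x y) (B i j x' y) \<and> B i j (sc c x) y = sc c (B i j x y))
   \<and> (\<forall>i j x y y' c. i + j \<le> 1 \<longrightarrow> x \<in> C i \<longrightarrow> y \<in> C j \<longrightarrow> y' \<in> C j \<longrightarrow>
        B i j x (uadd y y') = uadd (B i j x y) (B i j x y') \<and> B i j x (sc c y) = sc c (B i j x y))
   \<and> (\<forall>i j x y. i + j \<le> 1 \<longrightarrow> x \<in> C i \<longrightarrow> y \<in> C j \<longrightarrow> B i j x y = sc (- psign (i * j)) (B j i y x))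
   \<and> (\<forall>i j k x y z. i + j \<le> 1 \<longrightarrow> j + k \<le> 1 \<longrightarrow> i + k \<le> 1 \<longrightarrow> i + j + k \<le> 1 \<longrightarrow>
        x \<in> C i \<longrightarrow> y \<in> C j \<longrightarrow> z \<in> C k \<longrightarrow>
        uadd (B i (j + k) x (B j k y z)) (sc (- psign (i * j)) (B j (i + k) y (B i k x z)))
        = B (i + j) k (B i j x y) z)
   \<and> (\<forall>a \<phi> u. \<phi> \<in> C (-1) \<longrightarrow>
        E (B 0 (-1) (UG a) \<phi>) u = uadd (B 0 0 (UG a) (E \<phi> u)) (sc (-1) (E \<phi> (act a u))))"
proof (intro conjI allI impI)
  show "B i j x y \<in> C (i + j)" if "i + j \<le> 1" "x \<in> C i" "y \<in> C j" for i j x y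
    using br_closed that by blast
  show "B i j (uadd x x') y = uadd (B i j x y) (B i j x' y)" if "i + j \<le> 1" "x \<in> C i" "x' \<in> C i" "y \<in> C j" for i j x x' y
    using br_add1 that by blast
  show "B i j (sc c x) y = sc c (B i j x y)" if "i + j \<le> 1" "x \<in> C i" "x' \<in> C i" "y \<in> C j" for i j x x' y c
    using br_sc1 that by blast
  show "B i j x (uadd y y') = uadd (B i j x y) (B i j x y')" if "i + j \<le> 1" "x \<in> C i" "y \<in> C j" "y' \<in> C j" for i j x y y'
    using br_add2 that by blast
  show "B i j x (sc c y) = sc c (B i j x y)" if "i + j \<le> 1" "x \<in> C i" "y \<in> C j" "y' \<in> C j" for i j x y y' c
    using br_sc2 that by blast
  show "B i j x y = sc (- psign (i * j)) (B j i y x)" if "i + j \<le> 1" "x \<in> C i" "y \<in> C j" for i j x y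
    using anti that by blast
  show "uadd (B i (j + k) x (B j k y z)) (sc (- psign (i * j)) (B j (i + k) y (B i k x z)))
        = B (i + j) k (B i j x y) z"
    if "i + j \<le> 1" "j + k \<le> 1" "i + k \<le> 1" "i + j + k \<le> 1" "x \<in> C i" "y \<in> C j" "z \<in> C k" for i j k x y z
    using J_all_gen[OF refl that(1-4)] that(5-7) unfolding Jac_def by blast
  show "E (B 0 (-1) (UG a) \<phi>) u = uadd (B 0 0 (UG a) (E \<phi> u)) (sc (-1) (E \<phi> (act a u)))"
    if "\<phi> \<in> C (-1)" for a \<phi> u
    using last_claim that by blast
qed

end

theorem proposition4p6:
  fixes sg :: "'k::field_char_0 \<Rightarrow> 'g::ab_group_add \<Rightarrow> 'g"
    and sv :: "'k \<Rightarrow> 'v::ab_group_add \<Rightarrow> 'v"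
    and lb :: "'g \<Rightarrow> 'g \<Rightarrow> 'g"
    and act :: "'g \<Rightarrow> 'v \<Rightarrow> 'v"
  assumes V_vs: "vector_space sv"
    and lb_lin1: "\<And>b. Vector_Spaces.linear sg sg (\<lambda>a. lb a b)"
    and lb_lin2: "\<And>a. Vector_Spaces.linear sg sg (lb a)"
    and lb_alt: "\<And>a. lb a a = 0"
    and lb_jacobi: "\<And>a b c. lb a (lb b c) = lb (lb a b) c + lb b (lb a c)"
    and act_lin1: "\<And>u. Vector_Spaces.linear sg sv (\<lambda>a. act a u)"
    and act_lin2: "\<And>a. Vector_Spaces.linear sv sv (act a)"
    and act_rep: "\<And>a b u. act (lb a b) u = act a (act b u) - act b (act a u)"
  shows
    "(\<forall>i j x y. i + j \<le> 1 \<longrightarrow> x \<in> Ucar sg sv i \<longrightarrow> y \<in> Ucar sg sv j \<longrightarrow>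
        br sg sv lb act i j x y \<in> Ucar sg sv (i + j))
   \<and> (\<forall>i j x x' y c. i + j \<le> 1 \<longrightarrow> x \<in> Ucar sg sv i \<longrightarrow> x' \<in> Ucar sg sv i \<longrightarrow> y \<in> Ucar sg sv j \<longrightarrow>
        br sg sv lb act i j (uadd x x') y = uadd (br sg sv lb act i j x y) (br sg sv lb act i j x' y)
      \<and> br sg sv lb act i j (uscale sg sv c x) y = uscale sg sv c (br sg sv lb act i j x y))
   \<and> (\<forall>i j x y y' c. i + j \<le> 1 \<longrightarrow> x \<in> Ucar sg sv i \<longrightarrow> y \<in> Ucar sg sv j \<longrightarrow> y' \<in> Ucar sg sv j \<longrightarrow>
        br sg sv lb act i j x (uadd y y') = uadd (br sg sv lb act i j x y) (br sg sv lb act i j x y')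
      \<and> br sg sv lb act i j x (uscale sg sv c y) = uscale sg sv c (br sg sv lb act i j x y))
   \<and> (\<forall>i j x y. i + j \<le> 1 \<longrightarrow> x \<in> Ucar sg sv i \<longrightarrow> y \<in> Ucar sg sv j \<longrightarrow>
        br sg sv lb act i j x y = uscale sg sv (- psign (i * j)) (br sg sv lb act j i y x))
   \<and> (\<forall>i j k x y z. i + j \<le> 1 \<longrightarrow> j + k \<le> 1 \<longrightarrow> i + k \<le> 1 \<longrightarrow> i + j + k \<le> 1 \<longrightarrow>
        x \<in> Ucar sg sv i \<longrightarrow> y \<in> Ucar sg sv j \<longrightarrow> z \<in> Ucar sg sv k \<longrightarrow>
        uadd (br sg sv lb act i (j + k) x (br sg sv lb act j k y z))
             (uscale sg sv (- psign (i * j)) (br sg sv lb act j (i + k) y (br sg sv lb act i k x z)))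
        = br sg sv lb act (i + j) k (br sg sv lb act i j x y) z)
   \<and> (\<forall>a \<phi> u. \<phi> \<in> Ucar sg sv (-1) \<longrightarrow>
        ev act (br sg sv lb act 0 (-1) (UG a) \<phi>) u
        = uadd (br sg sv lb act 0 0 (UG a) (ev act \<phi> u)) (uscale sg sv (-1) (ev act \<phi> (act a u))))"
proof -
  have lg: "vector_space sg" using lb_lin1[of 0] unfolding Vector_Spaces.linear_iff by blast
  have lbA: "lb (a + a') b = lb a b + lb a' b" for a a' b using lb_lin1[of b] unfolding Vector_Spaces.linear_iff by blast
  have lbS: "lb (sg c a) b = sg c (lb a b)" for c a b using lb_lin1[of b] unfolding Vector_Spaces.linear_iff by blast
  have lbA2: "lb a (b + b') = lb a b + lb a b'" for a b b' using lb_lin2[of a] unfolding Vector_Spaces.linear_iff by blast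
  have lbS2: "lb a (sg c b) = sg c (lb a b)" for c a b using lb_lin2[of a] unfolding Vector_Spaces.linear_iff by blast
  have aA: "act (a + a') u = act a u + act a' u" for a a' u using act_lin1[of u] unfolding Vector_Spaces.linear_iff by blast
  have aS: "act (sg c a) u = sv c (act a u)" for c a u using act_lin1[of u] unfolding Vector_Spaces.linear_iff by blast
  have aA2: "act a (u + w) = act a u + act a w" for a u w using act_lin2[of a] unfolding Vector_Spaces.linear_iff by blast
  have aS2: "act a (sv c u) = sv c (act a u)" for c a u using act_lin2[of a] unfolding Vector_Spaces.linear_iff by blast
  interpret L: LS sg sv lb act
    by (rule LS.intro) (rule lg V_vs lbA lbS lbA2 lbS2 lb_alt lb_jacobi aA aS aA2 aS2 act_rep)+
  show ?thesis by (rule L.all_claims)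
qed

end
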